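(* Let $p$ be an odd prime, let $Q_0$ be an integer with $p\mid Q_0$, let $L$ and $v$ be positive integers, and let $\boldsymbol{h}=(h_1,\dots,h_L)\in\mathbb{Z}^L$. For $I\subseteq\{1,\dots,L\}$ put $H_I=\sum_{i\in I}h_i$, let $T=\{H_I: I\subseteq\{1,\dots,L\}\}$, and for $\tau\in T$ let $\mu(\tau)=\left|\{I\subseteq\{1,\dots,L\}: H_I\equiv\tau \ (\mathrm{mod}\ p^v)\}\right|$. If $2\mid\mu(\tau)$ for all $\tau\in T$, then there exists some $1\le i\le L$ such that $p\mid h_i$. *)

theory Defs
  imports "HOL-Number_Theory.Number_Theory"
begin

definition H_sub :: "(nat \<Rightarrow> int) \<Rightarrow> nat set \<Rightarrow> int" where
  "H_sub h I = (\<Sum>i\<in>I. h i)"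

end

theory Submission
  imports Defs
begin

definition cnt :: "(nat \<Rightarrow> int) \<Rightarrow> int \<Rightarrow> nat \<Rightarrow> int \<Rightarrow> nat" where
  "cnt h n k t = card {I. I \<subseteq> {1..k} \<and> n dvd (H_sub h I - t)}"

lemma cnt_cong:
  assumes "n dvd (s - t)" shows "cnt h n k s = cnt h n k t"
proof -
  have "n dvd (H_sub h I - s) \<longleftrightarrow> n dvd (H_sub h I - t)" for I
  proof -
    have "H_sub h I - t = (H_sub h I - s) + (s - t)" by simp
    moreover have "H_sub h I - s = (H_sub h I - t) - (s - t)" by simp
    ultimately show ?thesis using assms by (metis dvd_add dvd_diff)
  qed
  then show ?thesis unfolding cnt_def by simp
qed

lemma cnt_Suc:
  "cnt h n (Suc k) t = cnt h n k t + cnt h n k (t - h (Suc k))"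
proof -
  let ?A = "{I. I \<subseteq> {1..k} \<and> n dvd (H_sub h I - t)}"
  let ?C = "{I. I \<subseteq> {1..k} \<and> n dvd (H_sub h I - (t - h (Suc k)))}"
  let ?B = "insert (Suc k) ` ?C"
  have eq: "{I. I \<subseteq> {1..Suc k} \<and> n dvd (H_sub h I - t)} = ?A \<union> ?B"
  proof (rule equalityI; rule subsetI)
    fix I assume "I \<in> {I. I \<subseteq> {1..Suc k} \<and> n dvd (H_sub h I - t)}"
    then have I: "I \<subseteq> {1..Suc k}" "n dvd (H_sub h I - t)" by auto
    show "I \<in> ?A \<union> ?B"
    proof (cases "Suc k \<in> I")
      case True
      let ?J = "I - {Suc k}"
      have J: "?J \<subseteq> {1..k}" using I(1) by auto
      have fin: "finite ?J" using J finite_subset by blast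
      have "H_sub h I = h (Suc k) + H_sub h ?J"
        unfolding H_sub_def using True fin
        by (metis finite_insert insert_Diff sum.insert Diff_iff singletonI)
      then have "n dvd (H_sub h ?J - (t - h (Suc k)))" using I(2)
        by (simp add: algebra_simps)
      moreover have "I = insert (Suc k) ?J" using True by auto
      ultimately show ?thesis using J by blast
    next
      case False
      then have "I \<subseteq> {1..k}" using I(1) by (auto simp: le_Suc_eq)
      then show ?thesis using I(2) by blast
    qed
  next
    fix I assume "I \<in> ?A \<union> ?B"
    then show "I \<in> {I. I \<subseteq> {1..Suc k} \<and> n dvd (H_sub h I - t)}"
    proof
      assume "I \<in> ?A" then show ?thesis by auto
    next
      assume "I \<in> ?B"
      then obtain J where J: "J \<subseteq> {1..k}" "n dvd (H_sub h J - (t - h (Suc k)))"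
        and IJ: "I = insert (Suc k) J" by blast
      have fin: "finite J" using J finite_subset by blast
      have nin: "Suc k \<notin> J" using J by auto
      have "H_sub h I = h (Suc k) + H_sub h J"
        unfolding H_sub_def IJ using fin nin by simp
      then have "n dvd (H_sub h I - t)" using J(2) by (simp add: algebra_simps)
      then show ?thesis using J IJ by auto
    qed
  qed
  have finA: "finite ?A" by (rule finite_subset[of _ "Pow {1..k}"]) (blast, simp)
  have finB0: "finite ?C" by (rule finite_subset[of _ "Pow {1..k}"]) (blast, simp)
  have disj: "?A \<inter> ?B = {}"
  proof -
    have "Suc k \<notin> I" if "I \<in> ?A" for I using that by auto
    moreover have "Suc k \<in> I" if "I \<in> ?B" for I using that by auto
    ultimately show ?thesis by blast
  qed
  have inj: "inj_on (insert (Suc k)) ?C"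
    by (rule inj_onI) (metis (no_types, lifting) Suc_n_not_le_n atLeastAtMost_iff
        insert_ident mem_Collect_eq subsetD)
  have "card (?A \<union> ?B) = card ?A + card ?B"
    using finA finB0 disj by (simp add: card_Un_disjoint)
  also have "card ?B = card ?C" using inj by (rule card_image)
  finally show ?thesis unfolding cnt_def eq .
qed

lemma alt_contra:
  fixes n :: int
  assumes "odd n" "n > 0"
    and all: "\<forall>t. odd (cnt h n k t + cnt h n k (t - a))"
  shows False
proof -
  have P: "even (cnt h n k (t - int j * a)) \<longleftrightarrow> (even (cnt h n k t) \<longleftrightarrow> even j)" for t j
  proof (induction j)
    case 0 then show ?case by simp
  next
    case (Suc j)
    have "odd (cnt h n k (t - int j * a) + cnt h n k (t - int j * a - a))" using all by blast
    moreover have "t - int j * a - a = t - int (Suc j) * a" by (simp add: algebra_simps)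
    ultimately show ?case using Suc by auto
  qed
  have "cnt h n k (0 - int (nat n) * a) = cnt h n k 0"
    by (rule cnt_cong) (use \<open>n > 0\<close> in simp)
  moreover have "odd (nat n)" using assms(1,2) by (simp add: even_nat_iff)
  ultimately show False using P[of 0 "nat n"] by simp
qed

lemma const_parity:
  fixes n :: int
  assumes cop: "coprime a n" and npos: "n > 0"
    and all: "\<forall>t. even (cnt h n k t + cnt h n k (t - a))"
  shows "even (cnt h n k s) \<longleftrightarrow> even (cnt h n k t)"
proof -
  have P: "even (cnt h n k (t - int j * a)) \<longleftrightarrow> even (cnt h n k t)" for t j
  proof (induction j)
    case 0 then show ?case by simp
  next
    case (Suc j)
    have "even (cnt h n k (t - int j * a) + cnt h n k (t - int j * a - a))" using all by blast
    moreover have "t - int j * a - a = t - int (Suc j) * a" by (simp add: algebra_simps)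
    ultimately show ?case using Suc by auto
  qed
  obtain u w where uw: "u * a + w * n = 1"
    using cop by (metis bezout_int coprime_iff_gcd_eq_1)
  show ?thesis
  proof -
    define j where "j = nat (((t - s) * u) mod \<bar>n\<bar>)"
    have j: "int j = ((t - s) * u) mod \<bar>n\<bar>" unfolding j_def using npos by simp
    have "n dvd (t - int j * a - s)"
    proof -
      have "\<bar>n\<bar> dvd ((t - s) * u - int j)" unfolding j
        by (metis mod_mod_trivial mod_eq_dvd_iff)
      then have d: "n dvd ((t - s) * u - int j)" by simp
      have "t - int j * a - s = ((t - s) * u - int j) * a + (t - s) * w * n"
        using uw by (simp add: algebra_simps) (metis add.commute diff_add_cancel mult.commute
            mult.left_commute distrib_left mult_1_right)
      then show ?thesis using d by simp
    qed
    then have "cnt h n k (t - int j * a) = cnt h n k s" by (rule cnt_cong)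
    then show ?thesis using P[of t j] by simp
  qed
qed

theorem lemma5p5:
  fixes p :: nat and Q0 :: int and L v :: nat and h :: "nat \<Rightarrow> int"
  assumes "prime p" and "odd p"
    and "int p dvd Q0"
    and "L > 0" and "v > 0"
    and "\<forall>\<tau>\<in>{H_sub h I | I. I \<subseteq> {1..L}}.
           even (card {I. I \<subseteq> {1..L} \<and> [H_sub h I = \<tau>] (mod (int p ^ v))})"
  shows "\<exists>i\<in>{1..L}. int p dvd h i"
proof (rule ccontr)
  assume nd: "\<not> (\<exists>i\<in>{1..L}. int p dvd h i)"
  define n where "n = int p ^ v"
  have p2: "p \<ge> 2" using assms(1) prime_ge_2_nat by blast
  have n1: "n > 1"
  proof -
    have "int p > 1" using p2 by simp
    then show ?thesis unfolding n_def using assms(5) by (simp add: one_less_power)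
  qed
  have nodd: "odd n" unfolding n_def using assms(2) by simp
  have cop: "coprime (h i) n" if "i \<in> {1..L}" for i
  proof -
    have "prime (int p)" using assms(1) by simp
    then have "coprime (int p) (h i)" using nd that prime_imp_coprime by blast
    then show ?thesis unfolding n_def by (simp add: ac_simps)
  qed
  have claim: "k \<le> L \<Longrightarrow> (\<exists>t. odd (cnt h n k t)) \<and> (\<exists>t. even (cnt h n k t))" for k
  proof (induction k)
    case 0
    have "{I. I \<subseteq> {1..0::nat} \<and> n dvd (H_sub h I - 0)} = {{}}"
      by (auto simp: H_sub_def)
    then have a: "cnt h n 0 0 = 1" unfolding cnt_def by simp
    have "{I. I \<subseteq> {1..0::nat} \<and> n dvd (H_sub h I - 1)} = {}"
      using n1 by (auto simp: H_sub_def zdvd_not_zless)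
    then have b: "cnt h n 0 1 = 0" unfolding cnt_def by simp
    show ?case using a b by (metis even_zero odd_one)
  next
    case (Suc k)
    then have IH: "(\<exists>t. odd (cnt h n k t)) \<and> (\<exists>t. even (cnt h n k t))" by simp
    have c: "coprime (h (Suc k)) n" using cop Suc.prems by simp
    have "\<not> (\<forall>t. even (cnt h n (Suc k) t))"
    proof
      assume "\<forall>t. even (cnt h n (Suc k) t)"
      then have "\<forall>t. even (cnt h n k t + cnt h n k (t - h (Suc k)))"
        by (metis cnt_Suc)
      moreover have "n > 0" using n1 by simp
      ultimately have cp: "\<And>s t. even (cnt h n k s) \<longleftrightarrow> even (cnt h n k t)"
        using const_parity c by metis
      obtain t1 t2 where "odd (cnt h n k t1)" "even (cnt h n k t2)" using IH by blast
      then show False using cp[of t1 t2] by simp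
    qed
    moreover have "\<not> (\<forall>t. odd (cnt h n (Suc k) t))"
    proof
      assume "\<forall>t. odd (cnt h n (Suc k) t)"
      then have "\<forall>t. odd (cnt h n k t + cnt h n k (t - h (Suc k)))"
        by (metis cnt_Suc)
      moreover have "n > 0" using n1 by simp
      ultimately show False using alt_contra[OF nodd] by metis
    qed
    ultimately show ?case by blast
  qed
  then obtain t where t: "odd (cnt h n L t)" by blast
  then have "cnt h n L t \<noteq> 0" by (metis even_zero)
  then obtain I where I: "I \<subseteq> {1..L}" "n dvd (H_sub h I - t)"
    unfolding cnt_def by (metis (no_types, lifting) Collect_empty_eq card.empty)
  have "cnt h n L t = cnt h n L (H_sub h I)"
    by (rule cnt_cong) (use I(2) dvd_diff_commute in auto)
  moreover have "H_sub h I \<in> {H_sub h I | I. I \<subseteq> {1..L}}" using I by blast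
  ultimately have "even (cnt h n L t)" using assms(6)
    unfolding cnt_def n_def by (simp add: cong_iff_dvd_diff)
  then show False using t by simp
qed

end
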